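(* Let $S=k[x_{1,0},\ldots,x_{1,n_1},\ldots,x_{m,0},\ldots,x_{m,n_m}]$, $T=k[X_{1,0},\ldots,X_{1,n_1},\ldots,X_{m,0},\ldots,X_{m,n_m}]$, and for $i=1,\ldots,m$ let $S^{[i]}=k[x_{i,0},\ldots,x_{i,n_i}]$, $T^{[i]}=k[X_{i,0},\ldots,X_{i,n_i}]$, $F_i\in S^{[i]}_d$ and $F=F_1+\cdots+F_m\in S_d$. For each $i$ let $I^{[i]}\subsetneq T^{[i]}$ be a proper homogeneous ideal and $t_i\in I^{[i]}$ homogeneous, all $t_i$ of the same degree. Regarding each $F_i$ as a form in $S$ (so $F_i^\perp=\{g\in T: g\circ F_i=0\}$) and each $I^{[i]}$ as generating an ideal of $T$, set $J_i=(F_i^\perp : I^{[i]})+(t_i)\subset T$. Then for all $a_1,\ldots,a_m\in k$, \[(F^\perp : (I^{[1]}+ \cdots+ I^{[m]}) )+(a_1t_1+ \cdots+ a_mt_m) \subseteq J_1 \cap \cdots \cap J_m .\]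
   Context: $k$ is algebraically closed of characteristic zero; $T$ acts on $S$ by differentiation ($X_{i,j}\circ F=\partial F/\partial x_{i,j}$), and $F^\perp=\{g\in T: g\circ F=0\}$. *)

theory Defs
  imports "HOL-Library.Poly_Mapping" "HOL-Computational_Algebra.Polynomial"
begin

text \<open>Polynomials in the variables x_(i,j) (resp. X_(i,j)), indexed by pairs (i,j),
  represented as finitely supported maps from monomials (exponent vectors) to coefficients.\<close>

type_synonym 'k mpoly = "((nat \<times> nat) \<Rightarrow>\<^sub>0 nat) \<Rightarrow>\<^sub>0 'k"

definition alg_closed_field :: "'k::field itself \<Rightarrow> bool" where
  "alg_closed_field _ \<longleftrightarrow> (\<forall>p :: 'k poly. degree p > 0 \<longrightarrow> (\<exists>x. poly p x = 0))"

definition polys :: "(nat \<times> nat) set \<Rightarrow> 'k::zero mpoly set" where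
  "polys V = {p. \<forall>\<mu>\<in>Poly_Mapping.keys p. Poly_Mapping.keys \<mu> \<subseteq> V}"

definition mdeg :: "((nat \<times> nat) \<Rightarrow>\<^sub>0 nat) \<Rightarrow> nat" where
  "mdeg \<mu> = (\<Sum>v\<in>Poly_Mapping.keys \<mu>. Poly_Mapping.lookup \<mu> v)"

definition homog :: "nat \<Rightarrow> 'k::zero mpoly \<Rightarrow> bool" where
  "homog d p \<longleftrightarrow> (\<forall>\<mu>\<in>Poly_Mapping.keys p. mdeg \<mu> = d)"

definition hcomp :: "nat \<Rightarrow> 'k::comm_monoid_add mpoly \<Rightarrow> 'k mpoly" where
  "hcomp d p = (\<Sum>\<mu>\<in>{\<mu>\<in>Poly_Mapping.keys p. mdeg \<mu> = d}. Poly_Mapping.single \<mu> (Poly_Mapping.lookup p \<mu>))"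

definition const :: "'k::zero \<Rightarrow> 'k mpoly" where
  "const c = Poly_Mapping.single 0 c"

definition is_ideal :: "'k::comm_ring_1 mpoly set \<Rightarrow> 'k mpoly set \<Rightarrow> bool" where
  "is_ideal R I \<longleftrightarrow> I \<subseteq> R \<and> 0 \<in> I \<and> (\<forall>x\<in>I. \<forall>y\<in>I. x + y \<in> I)
     \<and> (\<forall>r\<in>R. \<forall>x\<in>I. r * x \<in> I)"

definition homogeneous_set :: "'k::comm_ring_1 mpoly set \<Rightarrow> bool" where
  "homogeneous_set I \<longleftrightarrow> (\<forall>p\<in>I. \<forall>d. hcomp d p \<in> I)"

definition gen_ideal :: "'k::comm_ring_1 mpoly set \<Rightarrow> 'k mpoly set \<Rightarrow> 'k mpoly set" where
  "gen_ideal R A = {p. \<exists>L. set L \<subseteq> R \<times> A \<and> p = sum_list (map (\<lambda>(r, a). r * a) L)}"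

definition ideal_sum :: "'k::comm_ring_1 mpoly set \<Rightarrow> 'k mpoly set \<Rightarrow> 'k mpoly set" where
  "ideal_sum A B = {x + y | x y. x \<in> A \<and> y \<in> B}"

definition colon :: "'k::comm_ring_1 mpoly set \<Rightarrow> 'k mpoly set \<Rightarrow> 'k mpoly set \<Rightarrow> 'k mpoly set" where
  "colon R A B = {g\<in>R. \<forall>h\<in>B. g * h \<in> A}"

text \<open>Action by differentiation: X^alpha applied to x^beta.\<close>
definition mono_le :: "((nat \<times> nat) \<Rightarrow>\<^sub>0 nat) \<Rightarrow> ((nat \<times> nat) \<Rightarrow>\<^sub>0 nat) \<Rightarrow> bool" where
  "mono_le \<alpha> \<beta> \<longleftrightarrow> (\<forall>v. Poly_Mapping.lookup \<alpha> v \<le> Poly_Mapping.lookup \<beta> v)"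

definition dcoef :: "((nat \<times> nat) \<Rightarrow>\<^sub>0 nat) \<Rightarrow> ((nat \<times> nat) \<Rightarrow>\<^sub>0 nat) \<Rightarrow> 'k::field_char_0" where
  "dcoef \<alpha> \<beta> = (\<Prod>v\<in>Poly_Mapping.keys \<beta>. of_nat (fact (Poly_Mapping.lookup \<beta> v)) / of_nat (fact (Poly_Mapping.lookup \<beta> v - Poly_Mapping.lookup \<alpha> v)))"

definition contract :: "'k::field_char_0 mpoly \<Rightarrow> 'k mpoly \<Rightarrow> 'k mpoly" (infixl \<open>\<circ>\<^sub>d\<close> 70) where
  "g \<circ>\<^sub>d F = (\<Sum>\<alpha>\<in>Poly_Mapping.keys g. \<Sum>\<beta>\<in>Poly_Mapping.keys F.
      if mono_le \<alpha> \<beta> then Poly_Mapping.single (\<beta> - \<alpha>) (Poly_Mapping.lookup g \<alpha> * Poly_Mapping.lookup F \<beta> * dcoef \<alpha> \<beta>) else 0)"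

definition perp :: "'k::field_char_0 mpoly set \<Rightarrow> 'k mpoly \<Rightarrow> 'k mpoly set" where
  "perp T F = {g\<in>T. g \<circ>\<^sub>d F = 0}"

end

theory Submission imports Defs begin

lemma keys_mono_add: "Poly_Mapping.keys ((\<alpha>::(nat\<times>nat)\<Rightarrow>\<^sub>0 nat) + \<beta>) = Poly_Mapping.keys \<alpha> \<union> Poly_Mapping.keys \<beta>"
  by (auto simp: in_keys_iff lookup_add)

lemma contract_eq:
  fixes g F :: "'k::field_char_0 mpoly"
  assumes "finite A" "Poly_Mapping.keys g \<subseteq> A" "finite B" "Poly_Mapping.keys F \<subseteq> B"
  shows "g \<circ>\<^sub>d F = (\<Sum>\<alpha>\<in>A. \<Sum>\<beta>\<in>B. if mono_le \<alpha> \<beta> then Poly_Mapping.single (\<beta> - \<alpha>) (Poly_Mapping.lookup g \<alpha> * Poly_Mapping.lookup F \<beta> * dcoef \<alpha> \<beta>) else 0)"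
proof -
  let ?f = "\<lambda>\<alpha> \<beta>. if mono_le \<alpha> \<beta> then Poly_Mapping.single (\<beta> - \<alpha>) (Poly_Mapping.lookup g \<alpha> * Poly_Mapping.lookup F \<beta> * dcoef \<alpha> \<beta>) else (0::'k mpoly)"
  have "g \<circ>\<^sub>d F = (\<Sum>\<alpha>\<in>Poly_Mapping.keys g. \<Sum>\<beta>\<in>Poly_Mapping.keys F. ?f \<alpha> \<beta>)"
    unfolding contract_def by simp
  also have "\<dots> = (\<Sum>\<alpha>\<in>Poly_Mapping.keys g. \<Sum>\<beta>\<in>B. ?f \<alpha> \<beta>)"
    by (rule sum.cong[OF refl], rule sum.mono_neutral_left) (use assms in \<open>auto simp: in_keys_iff\<close>)
  also have "\<dots> = (\<Sum>\<alpha>\<in>A. \<Sum>\<beta>\<in>B. ?f \<alpha> \<beta>)"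
    by (rule sum.mono_neutral_left) (use assms in \<open>auto simp: in_keys_iff intro!: sum.neutral\<close>)
  finally show ?thesis .
qed

lemma contract_add_right:
  fixes g F1 F2 :: "'k::field_char_0 mpoly"
  shows "g \<circ>\<^sub>d (F1 + F2) = g \<circ>\<^sub>d F1 + g \<circ>\<^sub>d F2"
proof -
  let ?A = "Poly_Mapping.keys g" and ?B = "Poly_Mapping.keys F1 \<union> Poly_Mapping.keys F2"
  have e: "\<And>F. Poly_Mapping.keys F \<subseteq> ?B \<Longrightarrow> g \<circ>\<^sub>d F = (\<Sum>\<alpha>\<in>?A. \<Sum>\<beta>\<in>?B. if mono_le \<alpha> \<beta> then Poly_Mapping.single (\<beta> - \<alpha>) (Poly_Mapping.lookup g \<alpha> * Poly_Mapping.lookup F \<beta> * dcoef \<alpha> \<beta>) else 0)"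
    by (rule contract_eq) auto
  have k: "Poly_Mapping.keys (F1 + F2) \<subseteq> ?B" by (rule keys_add)
  have t: "\<And>\<alpha> \<beta>. (if mono_le \<alpha> \<beta> then Poly_Mapping.single (\<beta> - \<alpha>) (Poly_Mapping.lookup g \<alpha> * Poly_Mapping.lookup (F1 + F2) \<beta> * dcoef \<alpha> \<beta>) else 0)
     = (if mono_le \<alpha> \<beta> then Poly_Mapping.single (\<beta> - \<alpha>) (Poly_Mapping.lookup g \<alpha> * Poly_Mapping.lookup F1 \<beta> * dcoef \<alpha> \<beta>) else 0)
     + (if mono_le \<alpha> \<beta> then Poly_Mapping.single (\<beta> - \<alpha>) (Poly_Mapping.lookup g \<alpha> * Poly_Mapping.lookup F2 \<beta> * dcoef \<alpha> \<beta>) else (0::'k mpoly))"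
    by (simp add: lookup_add distrib_left distrib_right single_add)
  show ?thesis
    unfolding e[OF k] e[of F1, OF Un_upper1] e[of F2, OF Un_upper2] t sum.distrib ..
qed

lemma contract_add_left:
  fixes g1 g2 F :: "'k::field_char_0 mpoly"
  shows "(g1 + g2) \<circ>\<^sub>d F = g1 \<circ>\<^sub>d F + g2 \<circ>\<^sub>d F"
proof -
  let ?A = "Poly_Mapping.keys g1 \<union> Poly_Mapping.keys g2" and ?B = "Poly_Mapping.keys F"
  have e: "\<And>g. Poly_Mapping.keys g \<subseteq> ?A \<Longrightarrow> g \<circ>\<^sub>d F = (\<Sum>\<alpha>\<in>?A. \<Sum>\<beta>\<in>?B. if mono_le \<alpha> \<beta> then Poly_Mapping.single (\<beta> - \<alpha>) (Poly_Mapping.lookup g \<alpha> * Poly_Mapping.lookup F \<beta> * dcoef \<alpha> \<beta>) else 0)"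
    by (rule contract_eq) auto
  have k: "Poly_Mapping.keys (g1 + g2) \<subseteq> ?A" by (rule keys_add)
  have t: "\<And>\<alpha> \<beta>. (if mono_le \<alpha> \<beta> then Poly_Mapping.single (\<beta> - \<alpha>) (Poly_Mapping.lookup (g1 + g2) \<alpha> * Poly_Mapping.lookup F \<beta> * dcoef \<alpha> \<beta>) else 0)
     = (if mono_le \<alpha> \<beta> then Poly_Mapping.single (\<beta> - \<alpha>) (Poly_Mapping.lookup g1 \<alpha> * Poly_Mapping.lookup F \<beta> * dcoef \<alpha> \<beta>) else 0)
     + (if mono_le \<alpha> \<beta> then Poly_Mapping.single (\<beta> - \<alpha>) (Poly_Mapping.lookup g2 \<alpha> * Poly_Mapping.lookup F \<beta> * dcoef \<alpha> \<beta>) else (0::'k mpoly))"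
    by (simp add: lookup_add distrib_left distrib_right single_add)
  show ?thesis
    unfolding e[OF k] e[of g1, OF Un_upper1] e[of g2, OF Un_upper2] t sum.distrib ..
qed

lemma contract_zero_right: "g \<circ>\<^sub>d (0::'k::field_char_0 mpoly) = 0"
  by (simp add: contract_def)

lemma contract_sum_right:
  fixes g :: "'k::field_char_0 mpoly"
  shows "g \<circ>\<^sub>d (\<Sum>i\<in>S. F i) = (\<Sum>i\<in>S. g \<circ>\<^sub>d F i)"
  by (induction S rule: infinite_finite_induct) (auto simp: contract_zero_right contract_add_right)

definition Zs :: "(nat \<times> nat) set \<Rightarrow> 'k::zero mpoly \<Rightarrow> bool" where
  "Zs A p \<longleftrightarrow> (\<forall>\<mu>\<in>Poly_Mapping.keys p. Poly_Mapping.keys \<mu> \<inter> A \<noteq> {})"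

lemma Zs_contract:
  fixes g F :: "'k::field_char_0 mpoly"
  assumes "Zs A g" "F \<in> polys W" "W \<inter> A = {}"
  shows "g \<circ>\<^sub>d F = 0"
  unfolding contract_def
proof (intro sum.neutral ballI)
  fix \<alpha> \<beta> assume a: "\<alpha> \<in> Poly_Mapping.keys g" and b: "\<beta> \<in> Poly_Mapping.keys F"
  from assms(1) a obtain v where v: "v \<in> Poly_Mapping.keys \<alpha>" "v \<in> A" unfolding Zs_def by blast
  have "v \<notin> Poly_Mapping.keys \<beta>" using assms(2,3) b v unfolding polys_def by blast
  hence "\<not> mono_le \<alpha> \<beta>" using v unfolding mono_le_def
    by (metis in_keys_iff le_zero_eq)
  thus "(if mono_le \<alpha> \<beta> then Poly_Mapping.single (\<beta> - \<alpha>) (Poly_Mapping.lookup g \<alpha> * Poly_Mapping.lookup F \<beta> * dcoef \<alpha> \<beta>) else 0) = 0" by simp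
qed

lemma Zs_add: "Zs A p \<Longrightarrow> Zs A q \<Longrightarrow> Zs A (p + q)"
proof -
  assume P: "Zs A p" and Q: "Zs A q"
  show ?thesis unfolding Zs_def
  proof
    fix \<mu> assume "\<mu> \<in> Poly_Mapping.keys (p + q)"
    hence "\<mu> \<in> Poly_Mapping.keys p \<or> \<mu> \<in> Poly_Mapping.keys q" using keys_add[of p q] by blast
    thus "Poly_Mapping.keys \<mu> \<inter> A \<noteq> {}" using P Q unfolding Zs_def by blast
  qed
qed

lemma Zs_zero: "Zs A 0" by (simp add: Zs_def)

lemma Zs_sum: "(\<And>i. i \<in> S \<Longrightarrow> Zs A (f i)) \<Longrightarrow> Zs A (\<Sum>i\<in>S. f i)"
  by (induction S rule: infinite_finite_induct) (auto simp: Zs_zero Zs_add)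

lemma Zs_mult_left: "Zs A p \<Longrightarrow> Zs A (q * (p::'k::comm_ring_1 mpoly))"
  unfolding Zs_def
proof
  fix \<mu> assume Z: "\<forall>\<mu>\<in>Poly_Mapping.keys p. Poly_Mapping.keys \<mu> \<inter> A \<noteq> {}" and m: "\<mu> \<in> Poly_Mapping.keys (q * p)"
  then obtain x y where xy: "\<mu> = x + y" "x \<in> Poly_Mapping.keys q" "y \<in> Poly_Mapping.keys p"
    using keys_mult[of q p] by blast
  have "Poly_Mapping.keys y \<inter> A \<noteq> {}" using Z xy(3) by blast
  thus "Poly_Mapping.keys \<mu> \<inter> A \<noteq> {}" unfolding xy(1) keys_mono_add by blast
qed

lemma Zs_mult_right: "Zs A p \<Longrightarrow> Zs A ((p::'k::comm_ring_1 mpoly) * q)"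
  using Zs_mult_left[of A p q] by (simp add: mult.commute)

lemma polys_add: "p \<in> polys V \<Longrightarrow> q \<in> polys V \<Longrightarrow> p + q \<in> polys V"
proof -
  assume P: "p \<in> polys V" and Q: "q \<in> polys V"
  show ?thesis unfolding polys_def
  proof (intro CollectI ballI)
    fix \<mu> assume "\<mu> \<in> Poly_Mapping.keys (p + q)"
    hence "\<mu> \<in> Poly_Mapping.keys p \<or> \<mu> \<in> Poly_Mapping.keys q" using keys_add[of p q] by blast
    thus "Poly_Mapping.keys \<mu> \<subseteq> V" using P Q unfolding polys_def by blast
  qed
qed

lemma polys_zero: "(0::'k::zero mpoly) \<in> polys V" unfolding polys_def by (simp only: mem_Collect_eq keys_zero ball_empty)

lemma polys_sum: "(\<And>i. i \<in> S \<Longrightarrow> f i \<in> polys V) \<Longrightarrow> (\<Sum>i\<in>S. f i) \<in> polys V"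
  by (induction S rule: infinite_finite_induct) (auto simp: polys_zero polys_add)

lemma polys_mult: "p \<in> polys V \<Longrightarrow> q \<in> polys V \<Longrightarrow> (p::'k::comm_ring_1 mpoly) * q \<in> polys V"
  unfolding polys_def
proof (intro CollectI ballI)
  fix \<mu> assume P: "p \<in> {p. \<forall>\<mu>\<in>Poly_Mapping.keys p. Poly_Mapping.keys \<mu> \<subseteq> V}"
    and Q: "q \<in> {p. \<forall>\<mu>\<in>Poly_Mapping.keys p. Poly_Mapping.keys \<mu> \<subseteq> V}" and m: "\<mu> \<in> Poly_Mapping.keys (p * q)"
  then obtain x y where xy: "\<mu> = x + y" "x \<in> Poly_Mapping.keys p" "y \<in> Poly_Mapping.keys q"
    using keys_mult[of p q] by blast
  thus "Poly_Mapping.keys \<mu> \<subseteq> V" using P Q unfolding xy(1) keys_mono_add by blast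
qed

lemma polys_mono: "V \<subseteq> W \<Longrightarrow> polys V \<subseteq> polys W"
  unfolding polys_def by blast

lemma polys_const: "const c \<in> polys V"
  by (simp add: polys_def const_def)

lemma gen_ideal_Zs:
  assumes "p \<in> gen_ideal R S" "\<And>a. a \<in> S \<Longrightarrow> Zs A (a::'k::comm_ring_1 mpoly)"
  shows "Zs A p"
proof -
  obtain L where L: "set L \<subseteq> R \<times> S" "p = sum_list (map (\<lambda>(r, a). r * a) L)"
    using assms(1) unfolding gen_ideal_def by blast
  have "Zs A (sum_list (map (\<lambda>(r, a). r * a) L))" using L(1)
    by (induction L) (auto simp: Zs_zero intro!: Zs_add Zs_mult_left intro: assms(2))
  thus ?thesis using L by simp
qed

lemma gen_ideal_polys:
  assumes "p \<in> gen_ideal (polys V) S" "S \<subseteq> polys V"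
  shows "(p::'k::comm_ring_1 mpoly) \<in> polys V"
proof -
  obtain L where L: "set L \<subseteq> polys V \<times> S" "p = sum_list (map (\<lambda>(r, a). r * a) L)"
    using assms(1) unfolding gen_ideal_def by blast
  have "sum_list (map (\<lambda>(r, a). r * a) L) \<in> polys V" using L(1) assms(2)
    by (induction L) (auto simp: polys_zero intro!: polys_add polys_mult)
  thus ?thesis using L by simp
qed

lemma gen_ideal_mono: "S \<subseteq> S' \<Longrightarrow> gen_ideal R S \<subseteq> gen_ideal R S'"
  unfolding gen_ideal_def by blast

lemma gen_ideal_single:
  assumes "p \<in> gen_ideal (polys V) {s}"
  shows "\<exists>r\<in>polys V. p = r * (s::'k::comm_ring_1 mpoly)"
proof -
  obtain L where L: "set L \<subseteq> polys V \<times> {s}" "p = sum_list (map (\<lambda>(r, a). r * a) L)"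
    using assms(1) unfolding gen_ideal_def by blast
  have "\<exists>r\<in>polys V. sum_list (map (\<lambda>(r, a). r * a) L) = r * s" using L(1)
  proof (induction L)
    case Nil thus ?case using polys_zero by force
  next
    case (Cons x L)
    then obtain r where r: "r \<in> polys V" "sum_list (map (\<lambda>(r, a). r * a) L) = r * s" by auto
    from Cons.prems have "fst x \<in> polys V" "snd x = s" by auto
    thus ?case using r by (intro bexI[of _ "fst x + r"]) (auto simp: distrib_right polys_add split: prod.splits)
  qed
  thus ?thesis using L by simp
qed

lemma gen_ideal_single_mem: "r \<in> R \<Longrightarrow> r * s \<in> gen_ideal R {s}"
  unfolding gen_ideal_def by (intro CollectI exI[of _ "[(r, s)]"]) auto

lemma mdeg_zero_iff: "mdeg \<mu> = 0 \<longleftrightarrow> \<mu> = 0"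
  unfolding mdeg_def by (auto simp: in_keys_iff intro!: poly_mapping_eqI)

lemma hcomp_zero: "hcomp 0 p = const (Poly_Mapping.lookup p 0)"
proof -
  have "{\<mu>\<in>Poly_Mapping.keys p. mdeg \<mu> = 0} = (if 0 \<in> Poly_Mapping.keys p then {0} else {})"
    by (auto simp: mdeg_zero_iff)
  thus ?thesis unfolding hcomp_def const_def by (auto simp: in_keys_iff)
qed

lemma no_const:
  fixes p :: "'k::field mpoly"
  assumes "is_ideal (polys W) I" "1 \<notin> I" "homogeneous_set I" "p \<in> I"
  shows "Poly_Mapping.lookup p 0 = 0"
proof (rule ccontr)
  assume c: "Poly_Mapping.lookup p 0 \<noteq> 0"
  have "const (Poly_Mapping.lookup p 0) \<in> I" using assms(3,4) hcomp_zero unfolding homogeneous_set_def by metis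
  hence "const (inverse (Poly_Mapping.lookup p 0)) * const (Poly_Mapping.lookup p 0) \<in> I"
    using assms(1) polys_const unfolding is_ideal_def by blast
  hence "(1::'k mpoly) \<in> I" using c by (simp add: const_def mult_single)
  thus False using assms(2) by simp
qed

lemma Zs_of_polys:
  assumes "p \<in> polys W" "W \<subseteq> A" "Poly_Mapping.lookup p 0 = 0"
  shows "Zs A p"
  unfolding Zs_def
proof
  fix \<mu> assume m: "\<mu> \<in> Poly_Mapping.keys p"
  hence "\<mu> \<noteq> 0" using assms(3) by (auto simp: in_keys_iff)
  hence "Poly_Mapping.keys \<mu> \<noteq> {}" by simp
  moreover have "Poly_Mapping.keys \<mu> \<subseteq> A" using assms(1,2) m unfolding polys_def by blast
  ultimately show "Poly_Mapping.keys \<mu> \<inter> A \<noteq> {}" by blast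
qed


theorem lemma5p2:
  fixes m d e :: nat and n :: "nat \<Rightarrow> nat"
    and F :: "nat \<Rightarrow> 'k::field_char_0 mpoly" and I :: "nat \<Rightarrow> 'k mpoly set"
    and t :: "nat \<Rightarrow> 'k mpoly" and a :: "nat \<Rightarrow> 'k"
  defines "V \<equiv> {(i, j). 1 \<le> i \<and> i \<le> m \<and> j \<le> n i}"
    and "Vi \<equiv> (\<lambda>i. {(i', j). i' = i \<and> j \<le> n i})"
  assumes "alg_closed_field TYPE('k)"
    and "\<And>i. i \<in> {1..m} \<Longrightarrow> F i \<in> polys (Vi i) \<and> homog d (F i)"
    and "\<And>i. i \<in> {1..m} \<Longrightarrow> is_ideal (polys (Vi i)) (I i) \<and> 1 \<notin> I i \<and> homogeneous_set (I i)"
    and "\<And>i. i \<in> {1..m} \<Longrightarrow> t i \<in> I i \<and> homog e (t i)"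
  shows "ideal_sum (colon (polys V) (perp (polys V) (\<Sum>i=1..m. F i))
                           (gen_ideal (polys V) (\<Union>i\<in>{1..m}. I i)))
                   (gen_ideal (polys V) {\<Sum>i=1..m. const (a i) * t i})
         \<subseteq> (\<Inter>i\<in>{1..m}. ideal_sum (colon (polys V) (perp (polys V) (F i)) (gen_ideal (polys V) (I i)))
                                  (gen_ideal (polys V) {t i}))"
proof
  fix x assume "x \<in> ideal_sum (colon (polys V) (perp (polys V) (\<Sum>i=1..m. F i))
                           (gen_ideal (polys V) (\<Union>i\<in>{1..m}. I i)))
                   (gen_ideal (polys V) {\<Sum>i=1..m. const (a i) * t i})"
  then obtain g h where x: "x = g + h"
    and g: "g \<in> colon (polys V) (perp (polys V) (\<Sum>i=1..m. F i)) (gen_ideal (polys V) (\<Union>i\<in>{1..m}. I i))"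
    and h: "h \<in> gen_ideal (polys V) {\<Sum>i=1..m. const (a i) * t i}"
    unfolding ideal_sum_def by blast
  obtain R where R: "R \<in> polys V" "h = R * (\<Sum>i=1..m. const (a i) * t i)"
    using gen_ideal_single[OF h] by blast
  have gV: "g \<in> polys V" using g unfolding colon_def by blast
  have ViV: "\<And>j. j \<in> {1..m} \<Longrightarrow> Vi j \<subseteq> V" unfolding Vi_def V_def by auto
  have Vdisj: "\<And>j k. j \<noteq> k \<Longrightarrow> Vi j \<inter> Vi k = {}" unfolding Vi_def by auto
  have Ipolys: "\<And>j. j \<in> {1..m} \<Longrightarrow> I j \<subseteq> polys (Vi j)"
    using assms(5) by (simp add: is_ideal_def)
  have IpolysV: "\<And>j. j \<in> {1..m} \<Longrightarrow> I j \<subseteq> polys V"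
    by (rule order_trans[OF Ipolys polys_mono[OF ViV]])
  have nc: "\<And>j p. j \<in> {1..m} \<Longrightarrow> p \<in> I j \<Longrightarrow> Poly_Mapping.lookup p 0 = 0"
  proof -
    fix j p assume j: "j \<in> {1..m}" and p: "p \<in> I j"
    show "Poly_Mapping.lookup p 0 = 0"
      using no_const[of "Vi j" "I j" p] assms(5)[OF j] p by blast
  qed
  have IZ: "\<And>j k p. j \<in> {1..m} \<Longrightarrow> p \<in> I j \<Longrightarrow> j \<noteq> k \<Longrightarrow> Zs (UNIV - Vi k) p"
  proof -
    fix j k p assume j: "j \<in> {1..m}" and p: "p \<in> I j" and jk: "j \<noteq> k"
    show "Zs (UNIV - Vi k) p"
      by (rule Zs_of_polys[of p "Vi j"]) (use Ipolys[OF j] p nc[OF j p] Vdisj[OF jk] in auto)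
  qed
  show "x \<in> (\<Inter>i\<in>{1..m}. ideal_sum (colon (polys V) (perp (polys V) (F i)) (gen_ideal (polys V) (I i)))
                                  (gen_ideal (polys V) {t i}))"
  proof
    fix i assume i: "i \<in> {1..m}"
    define w where "w = (\<Sum>j\<in>{1..m} - {i}. R * (const (a j) * t j))"
    define y where "y = (R * const (a i)) * t i"
    have "h = (\<Sum>j\<in>{1..m}. R * (const (a j) * t j))" using R(2) by (simp add: sum_distrib_left)
    also have "\<dots> = R * (const (a i) * t i) + w" unfolding w_def
      using i by (subst sum.remove[of _ i]) auto
    finally have hy: "h = y + w" unfolding y_def by (simp add: mult.assoc)
    have tV: "\<And>j. j \<in> {1..m} \<Longrightarrow> t j \<in> polys V" using IpolysV assms(6) by blast
    have wV: "w \<in> polys V" unfolding w_def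
      by (rule polys_sum) (use R(1) tV polys_const in \<open>auto intro!: polys_mult\<close>)
    have wZ: "Zs (UNIV - Vi i) w" unfolding w_def
      by (rule Zs_sum, rule Zs_mult_left, rule Zs_mult_left) (use IZ assms(6) in auto)
    have yI: "y \<in> gen_ideal (polys V) {t i}" unfolding y_def
      by (rule gen_ideal_single_mem) (use R(1) polys_const in \<open>auto intro!: polys_mult\<close>)
    have gw: "g + w \<in> colon (polys V) (perp (polys V) (F i)) (gen_ideal (polys V) (I i))"
      unfolding colon_def perp_def
    proof (intro CollectI conjI ballI)
      show gwV: "g + w \<in> polys V" using gV wV by (rule polys_add)
      fix u assume u: "u \<in> gen_ideal (polys V) (I i)"
      have uV: "u \<in> polys V" using gen_ideal_polys[OF u IpolysV[OF i]] .
      show "(g + w) * u \<in> polys V" using gwV uV by (rule polys_mult)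
      have wu: "(w * u) \<circ>\<^sub>d F i = 0"
        by (rule Zs_contract[of "UNIV - Vi i" _ _ "Vi i"]) (use wZ Zs_mult_right assms(4)[OF i] in auto)
      have u': "u \<in> gen_ideal (polys V) (\<Union>i\<in>{1..m}. I i)"
        using u gen_ideal_mono[of "I i" "\<Union>i\<in>{1..m}. I i"] i by blast
      have "(g * u) \<circ>\<^sub>d (\<Sum>i=1..m. F i) = 0"
        using g u' unfolding colon_def perp_def by blast
      hence s: "(\<Sum>j=1..m. (g * u) \<circ>\<^sub>d F j) = 0" by (simp add: contract_sum_right)
      have z: "\<And>j. j \<in> {1..m} - {i} \<Longrightarrow> (g * u) \<circ>\<^sub>d F j = 0"
      proof -
        fix j assume j: "j \<in> {1..m} - {i}"
        have "Zs (UNIV - Vi j) u"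
          by (rule gen_ideal_Zs[OF u]) (use IZ i j in auto)
        thus "(g * u) \<circ>\<^sub>d F j = 0"
          by (intro Zs_contract[of "UNIV - Vi j" _ _ "Vi j"] Zs_mult_left) (use assms(4) j in auto)
      qed
      have "(\<Sum>j=1..m. (g * u) \<circ>\<^sub>d F j) = (g * u) \<circ>\<^sub>d F i + (\<Sum>j\<in>{1..m} - {i}. (g * u) \<circ>\<^sub>d F j)"
        using i by (subst sum.remove[of _ i]) auto
      also have "\<dots> = (g * u) \<circ>\<^sub>d F i" using z by simp
      finally have gu: "(g * u) \<circ>\<^sub>d F i = 0" using s by simp
      show "(g + w) * u \<circ>\<^sub>d F i = 0"
        by (simp add: distrib_right contract_add_left gu wu)
    qed
    have "x = (g + w) + y" using x hy by (simp add: add_ac)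
    thus "x \<in> ideal_sum (colon (polys V) (perp (polys V) (F i)) (gen_ideal (polys V) (I i))) (gen_ideal (polys V) {t i})"
      unfolding ideal_sum_def using gw yI by blast
  qed
qed

end
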